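(* Let $F$ be the unique series in $\mathbb{Q}[x,\bar x,y,\bar y][[t]]$ satisfying $(1-St)F=\bar x\bar y-\bar x t[x^0][y^\ge]F-\bar y t[y^0][x^\ge]F$, and set $F_1=[x^<]F+[x^\ge][y^<]F$ and $F_2=[x^\ge][y^\ge]F$ (so $F=F_1+F_2$). Define $$H(x,y,t)=(\bar x-x)\,[\bar x]\Bigl(\bar y\,[y^\le]F_1(x,\bar y,t)-y\,[y^\ge]F_1(x,y,t)\Bigr).$$ Then $$F_2(x,y,t)=\bar x\bar y t\,[x^>][y^>]\frac{H(x,y,t)+H(y,x,t)}{1-St}.$$
   Context: Notation: $\bar x=x^{-1}$, $\bar y=y^{-1}$, $S=x+y+\bar x+\bar y$; series in $\mathbb{Q}[x,\bar x,y,\bar y][[t]]$, with $1/(1-St)$ expanded as a power series in $t$. For $G=\sum c_{i,j,n}x^iy^jt^n$: $[x^0]G=\sum_{j,n}c_{0,j,n}y^jt^n$, $[y^0]G=\sum_{i,n}c_{i,0,n}x^it^n$; $[x^<],[x^\le],[x^\ge],[x^>]$ denote the sums of terms with $x$-exponent $<0$, $\le0$, $\ge0$, $>0$ respectively, analogously for $y$; $[\bar x]G=\sum_{j,n}c_{-1,j,n}y^jt^n$ is the coefficient of $x^{-1}$. *)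

theory Defs
  imports Complex_Main
begin

text \<open>A series G in Q[x,1/x,y,1/y][[t]] is represented by its coefficient function:
  G i j n is the coefficient of x^i y^j t^n.\<close>
type_synonym series = "int \<Rightarrow> int \<Rightarrow> nat \<Rightarrow> rat"

definition is_series :: "series \<Rightarrow> bool" where
  "is_series G \<longleftrightarrow> (\<forall>n. finite {(i, j). G i j n \<noteq> 0})"

definition sadd :: "series \<Rightarrow> series \<Rightarrow> series" where
  "sadd F G = (\<lambda>i j n. F i j n + G i j n)"

definition ssub :: "series \<Rightarrow> series \<Rightarrow> series" where
  "ssub F G = (\<lambda>i j n. F i j n - G i j n)"

definition smono :: "int \<Rightarrow> int \<Rightarrow> nat \<Rightarrow> series \<Rightarrow> series" where
  "smono a b k G = (\<lambda>i j n. if k \<le> n then G (i - a) (j - b) (n - k) else 0)"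

definition smonomial :: "int \<Rightarrow> int \<Rightarrow> nat \<Rightarrow> series" where
  "smonomial a b k = (\<lambda>i j n. if i = a \<and> j = b \<and> n = k then 1 else 0)"

definition smulS :: "series \<Rightarrow> series" where
  "smulS G = sadd (sadd (smono 1 0 0 G) (smono (-1) 0 0 G)) (sadd (smono 0 1 0 G) (smono 0 (-1) 0 G))"

definition smul_1mSt :: "series \<Rightarrow> series" where
  "smul_1mSt G = ssub G (smono 0 0 1 (smulS G))"

text \<open>Division by 1 - S t, i.e. multiplication by the power series 1/(1-St) = sum_k S^k t^k:
  R = G + S t R, solved coefficientwise by recursion on the t-degree.\<close>
fun sdiv_1mSt :: "series \<Rightarrow> series" where
  "sdiv_1mSt G i j 0 = G i j 0"
| "sdiv_1mSt G i j (Suc n) = G i j (Suc n)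
     + sdiv_1mSt G (i - 1) j n + sdiv_1mSt G (i + 1) j n
     + sdiv_1mSt G i (j - 1) n + sdiv_1mSt G i (j + 1) n"

text \<open>Extraction of the terms whose x-exponent (resp. y-exponent) satisfies P;
  e.g. [x^<] is sproj_x (\<lambda>i. i < 0), [x^0] is sproj_x (\<lambda>i. i = 0).\<close>
definition sproj_x :: "(int \<Rightarrow> bool) \<Rightarrow> series \<Rightarrow> series" where
  "sproj_x P G = (\<lambda>i j n. if P i then G i j n else 0)"

definition sproj_y :: "(int \<Rightarrow> bool) \<Rightarrow> series \<Rightarrow> series" where
  "sproj_y P G = (\<lambda>i j n. if P j then G i j n else 0)"

text \<open>[x^{-1}] G: the coefficient of x^{-1}, a series in y and t.\<close>
definition scoeff_xbar :: "series \<Rightarrow> series" where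
  "scoeff_xbar G = (\<lambda>i j n. if i = 0 then G (-1) j n else 0)"

definition ssubst_ybar :: "series \<Rightarrow> series" where
  "ssubst_ybar G = (\<lambda>i j n. G i (-j) n)"

definition sswap :: "series \<Rightarrow> series" where
  "sswap G = (\<lambda>i j n. G j i n)"

end

theory Submission
  imports Defs
begin

lemma R_antix:
  assumes "\<And>i j n. G (-i) j n = - G i j n"
  shows "sdiv_1mSt G (-i) j n = - sdiv_1mSt G i j n"
proof (induction n arbitrary: i j)
  case 0 then show ?case using assms by simp
next
  case (Suc n)
  have e1: "-i - 1 = -(i+1)" "-i + 1 = -(i - 1)" by simp_all
  have a: "sdiv_1mSt G (-i - 1) j n = - sdiv_1mSt G (i + 1) j n"
    unfolding e1 by (rule Suc)
  have b: "sdiv_1mSt G (-i + 1) j n = - sdiv_1mSt G (i - 1) j n"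
    unfolding e1 by (rule Suc)
  show ?case using a b Suc[of i "j-1"] Suc[of i "j+1"] assms[of i j "Suc n"] by simp
qed

lemma R_antiy:
  assumes "\<And>i j n. G i (-j) n = - G i j n"
  shows "sdiv_1mSt G i (-j) n = - sdiv_1mSt G i j n"
proof (induction n arbitrary: i j)
  case 0 then show ?case using assms by simp
next
  case (Suc n)
  have e1: "-j - 1 = -(j+1)" "-j + 1 = -(j - 1)" by simp_all
  have a: "sdiv_1mSt G i (-j - 1) n = - sdiv_1mSt G i (j + 1) n"
    unfolding e1 by (rule Suc)
  have b: "sdiv_1mSt G i (-j + 1) n = - sdiv_1mSt G i (j - 1) n"
    unfolding e1 by (rule Suc)
  show ?case using a b Suc[of "i-1" j] Suc[of "i+1" j] assms[of i j "Suc n"] by simp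
qed

theorem mainTheorem8:
  fixes F F1 F2 H K :: series
  assumes F_series: "is_series F"
    and F_eq: "smul_1mSt F =
       ssub (ssub (smonomial (-1) (-1) 0)
                  (smono (-1) 0 1 (sproj_x (\<lambda>i. i = 0) (sproj_y (\<lambda>j. j \<ge> 0) F))))
            (smono 0 (-1) 1 (sproj_y (\<lambda>j. j = 0) (sproj_x (\<lambda>i. i \<ge> 0) F)))"
    and F1_def: "F1 = sadd (sproj_x (\<lambda>i. i < 0) F) (sproj_x (\<lambda>i. i \<ge> 0) (sproj_y (\<lambda>j. j < 0) F))"
    and F2_def: "F2 = sproj_x (\<lambda>i. i \<ge> 0) (sproj_y (\<lambda>j. j \<ge> 0) F)"
    and H_def: "H = ssub (smono (-1) 0 0 K) (smono 1 0 0 K)"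
    and K_def: "K = scoeff_xbar (ssub (smono 0 (-1) 0 (sproj_y (\<lambda>j. j \<le> 0) (ssubst_ybar F1)))
                                    (smono 0 1 0 (sproj_y (\<lambda>j. j \<ge> 0) F1)))"
  shows "F2 = smono (-1) (-1) 1
                (sproj_x (\<lambda>i. i > 0) (sproj_y (\<lambda>j. j > 0) (sdiv_1mSt (sadd H (sswap H)))))"
proof -
  have F0: "F i j 0 = (if i = -1 \<and> j = -1 then 1 else 0)" for i j
    using fun_cong[OF fun_cong[OF fun_cong[OF F_eq, of i], of j], of 0]
    by (simp add: smul_1mSt_def ssub_def smono_def smonomial_def)
  have FS: "F i j (Suc n) = F (i-1) j n + F (i+1) j n + F i (j-1) n + F i (j+1) n
      - (if i = -1 \<and> j \<ge> 0 then F 0 j n else 0) - (if j = -1 \<and> i \<ge> 0 then F i 0 n else 0)" for i j n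
    using fun_cong[OF fun_cong[OF fun_cong[OF F_eq, of i], of j], of "Suc n"]
    by (cases "i = -1"; cases "j = -1")
       (auto simp add: smul_1mSt_def ssub_def smono_def smonomial_def smulS_def sadd_def
        sproj_x_def sproj_y_def algebra_simps)
  have sym: "F i j n = F j i n" for i j n
  proof (induction n arbitrary: i j)
    case 0 then show ?case by (simp add: F0)
  next
    case (Suc n)
    show ?case
      unfolding FS[of i j n] FS[of j i n]
      using Suc[of "i-1" j] Suc[of "i+1" j] Suc[of i "j-1"] Suc[of i "j+1"]
        Suc[of 0 j] Suc[of i 0] by auto
  qed
  define k where "k j n = (if j \<le> -1 then F (-1) (-j-1) n else 0) - (if j \<ge> 1 then F (-1) (j-1) n else 0)" for j n
  have Kf: "K i j n = (if i = 0 then k j n else 0)" for i j n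
    unfolding K_def F1_def k_def
    by (auto simp add: scoeff_xbar_def ssub_def smono_def sproj_y_def ssubst_ybar_def sadd_def sproj_x_def)
  define G where "G = sadd H (sswap H)"
  have Gf: "G i j n = (if i = -1 then k j n else 0) - (if i = 1 then k j n else 0)
     + (if j = -1 then k i n else 0) - (if j = 1 then k i n else 0)" for i j n
    unfolding G_def H_def by (simp add: sadd_def sswap_def ssub_def smono_def Kf)
  have kanti: "k (-j) n = - k j n" for j n unfolding k_def by auto
  have Gx: "G (-i) j n = - G i j n" for i j n unfolding Gf using kanti by auto
  have Gy: "G i (-j) n = - G i j n" for i j n unfolding Gf using kanti by auto
  define R where "R = sdiv_1mSt G"
  have R0x: "R 0 j n = 0" for j n
    using R_antix[of G 0 j n, OF Gx] unfolding R_def by simp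
  have R0y: "R i 0 n = 0" for i n
    using R_antiy[of G i 0 n, OF Gy] unfolding R_def by simp
  have Gq: "G (i+1) (j+1) n = (if i = 0 then F (-1) j n else 0) + (if j = 0 then F i (-1) n else 0)"
    if "i \<ge> 0" "j \<ge> 0" for i j n
    using that unfolding Gf k_def using sym[of i "-1" n] by auto
  have main: "F i j (Suc n) = R (i+1) (j+1) n" if "i \<ge> 0" "j \<ge> 0" for i j n
    using that
  proof (induction n arbitrary: i j)
    case 0
    then show ?case unfolding R_def using Gq[of i j 0] by (simp add: FS F0)
  next
    case (Suc n)
    have q: "i+1+1 = i+2" "j+1+1 = j+2" by simp_all
    have e1: "F (i+1) j (Suc n) = R (i+2) (j+1) n" using Suc.IH[of "i+1" j] Suc.prems unfolding q by simp
    have e2: "F i (j+1) (Suc n) = R (i+1) (j+2) n" using Suc.IH[of i "j+1"] Suc.prems unfolding q by simp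
    have e3: "F (i-1) j (Suc n) + R i (j+1) n =
       (if i = 0 then F (-1) j (Suc n) else 0) + R i (j+1) n + F (i-1) j (Suc n) - (if i = 0 then F (-1) j (Suc n) else 0)"
      by simp
    have e3: "(if i = 0 then F (-1) j (Suc n) else 0) + R i (j+1) n = F (i-1) j (Suc n)"
    proof (cases "i = 0")
      case True then show ?thesis using R0x by simp
    next
      case False then show ?thesis using Suc.IH[of "i-1" j] Suc.prems by simp
    qed
    have e4: "(if j = 0 then F i (-1) (Suc n) else 0) + R (i+1) j n = F i (j-1) (Suc n)"
    proof (cases "j = 0")
      case True then show ?thesis using R0y by simp
    next
      case False then show ?thesis using Suc.IH[of i "j-1"] Suc.prems by simp
    qed
    have "R (i+1) (j+1) (Suc n) = G (i+1) (j+1) (Suc n) + R i (j+1) n + R (i+2) (j+1) n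
        + R (i+1) j n + R (i+1) (j+2) n"
      unfolding R_def by (simp add: algebra_simps)
    also have "\<dots> = F (i-1) j (Suc n) + F (i+1) j (Suc n) + F i (j-1) (Suc n) + F i (j+1) (Suc n)"
      using Gq[of i j "Suc n"] Suc.prems e1 e2 e3 e4 by simp
    also have "\<dots> = F i j (Suc (Suc n))" using FS[of i j "Suc n"] Suc.prems by simp
    finally show ?case by simp
  qed
  show ?thesis
  proof (intro ext)
    fix i j n
    show "F2 i j n = smono (-1) (-1) 1
                (sproj_x (\<lambda>i. i > 0) (sproj_y (\<lambda>j. j > 0) (sdiv_1mSt (sadd H (sswap H))))) i j n"
    proof (cases n)
      case 0 then show ?thesis by (auto simp: F2_def sproj_x_def sproj_y_def smono_def F0)
    next
      case (Suc m) then show ?thesis using main[of i j m]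
        by (auto simp: F2_def sproj_x_def sproj_y_def smono_def R_def G_def)
    qed
  qed
qed

end
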